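(* Let $0<s<t\le1$, let $\mathbf x_t\in\mathsf X$ with $p_t(\mathbf x_t)>0$, and let $(\mathbf x_s,\mathbf u_s)\in\mathsf X\times\mathsf X$. Then $$\sum_{\mathbf u_t\in\mathsf X}\bar p_{s|t}\big((\mathbf x_s,\mathbf u_s)\mid(\mathbf x_t,\mathbf u_t)\big)\,\rho_t(\mathbf u_t\mid\mathbf x_t)=p_{s|t}(\mathbf x_s\mid\mathbf x_t)\,\rho_s(\mathbf u_s\mid\mathbf x_s).$$ If $p_s(\mathbf x_s)=0$, the right-hand side is interpreted as $0$.
   Context: **UDM setup.** - Let $K\ge2$, $L\ge1$ and $\mathsf V=\{1,\dots,K\}$. Tokens are identified with the standard basis vectors of $\mathbb R^K$, and $\mathbf 1$ is the all-ones vector. - $\mathsf X=\mathsf V^L$, with $\mathbf x^\ell$ the $\ell$-th token. $p_0$ is a distribution on $\mathsf X$. - The schedule $\alpha:[0,1]\to[0,1]$ is strictly decreasing, with $\alpha_0=1$ and $\alpha_t\in(0,1)$ for $t\in(0,1]$. Set $\alpha_{t|s}=\alpha_t/\alpha_s$. - The UDM forward kernel is $q_{t|s}(\mathbf x_t\mid\mathbf x_s)=\prod_\ell\langle\mathbf x_t^\ell,\alpha_{t|s}\mathbf x_s^\ell+(1-\alpha_{t|s})\mathbf 1/K\rangle$. - $p_t(\mathbf x)=\sum_{\mathbf x_0}p_0(\mathbf x_0)q_{t|0}(\mathbf x\mid\mathbf x_0)$. - UDM reverse kernel: $p_{s|t}(\mathbf x_s\mid\mathbf x_t)=p_s(\mathbf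 x_s)q_{t|s}(\mathbf x_t\mid\mathbf x_s)/p_t(\mathbf x_t)$. - UDM bridge: $q_{s|0,t}(\mathbf x_s\mid\mathbf x_0,\mathbf x_t)=q_{t|s}(\mathbf x_t\mid\mathbf x_s)q_{s|0}(\mathbf x_s\mid\mathbf x_0)/q_{t|0}(\mathbf x_t\mid\mathbf x_0)$. **Absorbing lifting.** - For $\mathbf u\in\mathsf X$, define $q_{t|0}(\mathbf x_t\mid\mathbf x_0,\mathbf u)=\prod_\ell\langle\mathbf x_t^\ell,\alpha_t\mathbf x_0^\ell+(1-\alpha_t)\mathbf u^\ell\rangle$. - $p_t(\mathbf x\mid\mathbf u)=\sum_{\mathbf x_0}p_0(\mathbf x_0)q_{t|0}(\mathbf x\mid\mathbf x_0,\mathbf u)$. - Noise-conditioned denoiser: $p_{0|t}(\mathbf x_0\mid\mathbf x_t,\mathbf u)=p_0(\mathbf x_0)q_{t|0}(\mathbf x_t\mid\mathbf x_0,\mathbf u)/p_t(\mathbf x_t\mid\mathbf u)$, defined when $p_t(\mathbf x_t\mid\mathbf u)>0$. - $\rho_t(\mathbf u\mid\mathbf x_t):=K^{-L}p_t(\mathbf x_t\mid\mathbf u)/p_t(\mathbf x_t)$. This is the posterior of $\mathbf u$ under a uniform prior on $\mathsf X$. **Resampling law.** - $r_s(\mathbf u_s\mid\mathbf x_0,\mathbf x_s):=K^{-L}q_{s|0}(\mathbf x_s\mid\mathbf x_0,\mathbf u_s)/q_{s|0}(\mathbf x_s\mid\mathbf x_0)$. - Explicitly, it is the product over $\ell$ of: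 $\mathrm{Cat}(\mathbf u_s^\ell;\mathbf x_s^\ell)$ if $\mathbf x_s^\ell\ne\mathbf x_0^\ell$, and $\mathrm{Cat}\big(\mathbf u_s^\ell;\frac{\alpha_s\mathbf 1+(1-\alpha_s)\mathbf x_0^\ell}{1+(K-1)\alpha_s}\big)$ if $\mathbf x_s^\ell=\mathbf x_0^\ell$. **Lifted kernel.** $$\bar p_{s|t}((\mathbf x_s,\mathbf u_s)\mid(\mathbf x_t,\mathbf u_t)):=\sum_{\mathbf x_0}r_s(\mathbf u_s\mid\mathbf x_0,\mathbf x_s)\,q_{s|0,t}(\mathbf x_s\mid\mathbf x_0,\mathbf x_t)\,p_{0|t}(\mathbf x_0\mid\mathbf x_t,\mathbf u_t).$$ *)

theory Defs
  imports "HOL-Analysis.Analysis"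
begin

text \<open>Tokens: elements of a finite type 'v (K = CARD('v)); positions: a finite type 'l
  (L = CARD('l)); sequences X = V^L are functions 'l \<Rightarrow> 'v.
  The inner product of two one-hot vectors is the indicator of equality, and
  the inner product of a one-hot vector with 1/K is 1/K.\<close>

definition valid_schedule :: "(real \<Rightarrow> real) \<Rightarrow> bool" where
  "valid_schedule \<alpha> \<longleftrightarrow> strict_antimono_on {0..1} \<alpha> \<and> \<alpha> 0 = 1 \<and>
     (\<forall>t\<in>{0<..1}. 0 < \<alpha> t \<and> \<alpha> t < 1)"

definition valid_dist :: "(('l::finite \<Rightarrow> 'v::finite) \<Rightarrow> real) \<Rightarrow> bool" where
  "valid_dist p \<longleftrightarrow> (\<forall>x. 0 \<le> p x) \<and> (\<Sum>x\<in>UNIV. p x) = 1"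

definition qf :: "(real \<Rightarrow> real) \<Rightarrow> real \<Rightarrow> real \<Rightarrow> ('l::finite \<Rightarrow> 'v::finite) \<Rightarrow> ('l \<Rightarrow> 'v) \<Rightarrow> real" where
  "qf \<alpha> t s xt xs = (\<Prod>l\<in>UNIV. (\<alpha> t / \<alpha> s) * (if xt l = xs l then 1 else 0)
       + (1 - \<alpha> t / \<alpha> s) / real CARD('v))"

definition pt :: "(('l::finite \<Rightarrow> 'v::finite) \<Rightarrow> real) \<Rightarrow> (real \<Rightarrow> real) \<Rightarrow> real \<Rightarrow> ('l \<Rightarrow> 'v) \<Rightarrow> real" where
  "pt p0 \<alpha> t x = (\<Sum>x0\<in>UNIV. p0 x0 * qf \<alpha> t 0 x x0)"

definition prev :: "(('l::finite \<Rightarrow> 'v::finite) \<Rightarrow> real) \<Rightarrow> (real \<Rightarrow> real) \<Rightarrow> real \<Rightarrow> real \<Rightarrow> ('l \<Rightarrow> 'v) \<Rightarrow> ('l \<Rightarrow> 'v) \<Rightarrow> real" where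
  "prev p0 \<alpha> s t xs xt = pt p0 \<alpha> s xs * qf \<alpha> t s xt xs / pt p0 \<alpha> t xt"

definition qbridge :: "(real \<Rightarrow> real) \<Rightarrow> real \<Rightarrow> real \<Rightarrow> ('l::finite \<Rightarrow> 'v::finite) \<Rightarrow> ('l \<Rightarrow> 'v) \<Rightarrow> ('l \<Rightarrow> 'v) \<Rightarrow> real" where
  "qbridge \<alpha> s t xs x0 xt = qf \<alpha> t s xt xs * qf \<alpha> s 0 xs x0 / qf \<alpha> t 0 xt x0"

definition qu :: "(real \<Rightarrow> real) \<Rightarrow> real \<Rightarrow> ('l::finite \<Rightarrow> 'v::finite) \<Rightarrow> ('l \<Rightarrow> 'v) \<Rightarrow> ('l \<Rightarrow> 'v) \<Rightarrow> real" where
  "qu \<alpha> t xt x0 u = (\<Prod>l\<in>UNIV. \<alpha> t * (if xt l = x0 l then 1 else 0)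
       + (1 - \<alpha> t) * (if xt l = u l then 1 else 0))"

definition ptu :: "(('l::finite \<Rightarrow> 'v::finite) \<Rightarrow> real) \<Rightarrow> (real \<Rightarrow> real) \<Rightarrow> real \<Rightarrow> ('l \<Rightarrow> 'v) \<Rightarrow> ('l \<Rightarrow> 'v) \<Rightarrow> real" where
  "ptu p0 \<alpha> t x u = (\<Sum>x0\<in>UNIV. p0 x0 * qu \<alpha> t x x0 u)"

definition pden :: "(('l::finite \<Rightarrow> 'v::finite) \<Rightarrow> real) \<Rightarrow> (real \<Rightarrow> real) \<Rightarrow> real \<Rightarrow> ('l \<Rightarrow> 'v) \<Rightarrow> ('l \<Rightarrow> 'v) \<Rightarrow> ('l \<Rightarrow> 'v) \<Rightarrow> real" where
  "pden p0 \<alpha> t x0 xt u = p0 x0 * qu \<alpha> t xt x0 u / ptu p0 \<alpha> t xt u"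

definition rho :: "(('l::finite \<Rightarrow> 'v::finite) \<Rightarrow> real) \<Rightarrow> (real \<Rightarrow> real) \<Rightarrow> real \<Rightarrow> ('l \<Rightarrow> 'v) \<Rightarrow> ('l \<Rightarrow> 'v) \<Rightarrow> real" where
  "rho p0 \<alpha> t u xt = (1 / real CARD('v)) ^ CARD('l) * ptu p0 \<alpha> t xt u / pt p0 \<alpha> t xt"

definition rres :: "(real \<Rightarrow> real) \<Rightarrow> real \<Rightarrow> ('l::finite \<Rightarrow> 'v::finite) \<Rightarrow> ('l \<Rightarrow> 'v) \<Rightarrow> ('l \<Rightarrow> 'v) \<Rightarrow> real" where
  "rres \<alpha> s us x0 xs = (1 / real CARD('v)) ^ CARD('l) * qu \<alpha> s xs x0 us / qf \<alpha> s 0 xs x0"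

definition plift :: "(('l::finite \<Rightarrow> 'v::finite) \<Rightarrow> real) \<Rightarrow> (real \<Rightarrow> real) \<Rightarrow> real \<Rightarrow> real \<Rightarrow>
    ('l \<Rightarrow> 'v) \<Rightarrow> ('l \<Rightarrow> 'v) \<Rightarrow> ('l \<Rightarrow> 'v) \<Rightarrow> ('l \<Rightarrow> 'v) \<Rightarrow> real" where
  "plift p0 \<alpha> s t xs us xt ut = (\<Sum>x0\<in>UNIV. rres \<alpha> s us x0 xs * qbridge \<alpha> s t xs x0 xt
       * pden p0 \<alpha> t x0 xt ut)"

end

theory Submission
  imports Defs "HOL-Library.FuncSet"
begin

lemma sum_qu:
  "(\<Sum>u\<in>UNIV. qu \<alpha> t (xt::'l::finite \<Rightarrow> 'v::finite) x0 u) =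
   (\<Prod>l\<in>UNIV. real CARD('v) * (\<alpha> t * (if xt l = x0 l then 1 else 0)) + (1 - \<alpha> t))"
proof -
  have "(\<Sum>u\<in>UNIV. qu \<alpha> t xt x0 u) =
     (\<Sum>u\<in>PiE UNIV (\<lambda>_. UNIV). \<Prod>l\<in>UNIV. \<alpha> t * (if xt l = x0 l then 1 else 0)
       + (1 - \<alpha> t) * (if xt l = u l then 1 else 0))"
    unfolding qu_def by simp
  also have "\<dots> = (\<Prod>l\<in>UNIV. \<Sum>v\<in>UNIV. \<alpha> t * (if xt l = x0 l then 1 else 0)
       + (1 - \<alpha> t) * (if xt l = v then 1 else 0))"
    by (rule prod_sum_PiE[symmetric]) auto
  also have "\<dots> = (\<Prod>l\<in>UNIV. real CARD('v) * (\<alpha> t * (if xt l = x0 l then 1 else 0)) + (1 - \<alpha> t))"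
  proof (rule prod.cong[OF refl])
    fix l
    have "(\<Sum>v\<in>UNIV. (1 - \<alpha> t) * (if xt l = v then 1 else 0)) = (1 - \<alpha> t)"
    proof -
      have "(\<Sum>v\<in>UNIV. (1 - \<alpha> t) * (if xt l = v then 1 else 0)) =
         (1 - \<alpha> t) * (\<Sum>v\<in>UNIV. (if xt l = v then 1 else 0))"
        by (rule sum_distrib_left[symmetric])
      also have "(\<Sum>v\<in>UNIV. (if xt l = v then 1 else 0)) = (1::real)"
        by (simp add: sum.delta')
      finally show ?thesis by simp
    qed
    then show "(\<Sum>v\<in>UNIV. \<alpha> t * (if xt l = x0 l then 1 else 0)
       + (1 - \<alpha> t) * (if xt l = v then 1 else 0)) =
       real CARD('v) * (\<alpha> t * (if xt l = x0 l then 1 else 0)) + (1 - \<alpha> t)"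
      by (simp add: sum.distrib)
  qed
  finally show ?thesis .
qed

lemma c_sum_qu:
  assumes a0: "\<alpha> 0 = 1"
  shows "(1 / real CARD('v)) ^ CARD('l) * (\<Sum>u\<in>UNIV. qu \<alpha> t (xt::'l::finite \<Rightarrow> 'v::finite) x0 u)
     = qf \<alpha> t 0 xt x0"
proof -
  have K: "real CARD('v) > 0" by simp
  have "(1 / real CARD('v)) ^ CARD('l) = (\<Prod>l\<in>(UNIV::'l set). 1 / real CARD('v))" by simp
  then have "(1 / real CARD('v)) ^ CARD('l) * (\<Sum>u\<in>UNIV. qu \<alpha> t xt x0 u)
     = (\<Prod>l\<in>UNIV. (1 / real CARD('v)) * (real CARD('v) * (\<alpha> t * (if xt l = x0 l then 1 else 0)) + (1 - \<alpha> t)))"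
    by (simp only: sum_qu prod.distrib)
  also have "\<dots> = qf \<alpha> t 0 xt x0"
    unfolding qf_def a0 using K by (intro prod.cong refl) (simp add: field_simps)
  finally show ?thesis .
qed

lemma qf0_pos:
  assumes a0: "\<alpha> 0 = 1" and "0 < \<alpha> t" "\<alpha> t < 1"
  shows "qf \<alpha> t 0 (x::'l::finite \<Rightarrow> 'v::finite) x0 > 0"
  unfolding qf_def a0 using assms
  by (intro prod_pos) (auto intro!: add_nonneg_pos add_pos_pos)

lemma qu_nonneg:
  assumes "0 < \<alpha> t" "\<alpha> t < 1"
  shows "qu \<alpha> t x x0 u \<ge> 0"
  unfolding qu_def using assms by (intro prod_nonneg) auto

theorem mainTheorem6:
  fixes p0 :: "('l::finite \<Rightarrow> 'v::finite) \<Rightarrow> real"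
    and \<alpha> :: "real \<Rightarrow> real"
    and s t :: real
    and xt xs us :: "'l \<Rightarrow> 'v"
  assumes K2: "CARD('v) \<ge> 2"
    and sched: "valid_schedule \<alpha>"
    and dist: "valid_dist p0"
    and st: "0 < s" "s < t" "t \<le> 1"
    and pos: "pt p0 \<alpha> t xt > 0"
  shows "(\<Sum>ut\<in>UNIV. plift p0 \<alpha> s t xs us xt ut * rho p0 \<alpha> t ut xt) =
         (if pt p0 \<alpha> s xs = 0 then 0 else prev p0 \<alpha> s t xs xt * rho p0 \<alpha> s us xs)"
proof -
  define c where "c = (1 / real CARD('v)) ^ CARD('l)"
  have a0: "\<alpha> 0 = 1" using sched unfolding valid_schedule_def by auto
  have at: "0 < \<alpha> t" "\<alpha> t < 1" using sched st unfolding valid_schedule_def by auto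
  have as: "0 < \<alpha> s" "\<alpha> s < 1" using sched st unfolding valid_schedule_def by auto
  have p0nn: "\<And>x. p0 x \<ge> 0" and p0sum: "(\<Sum>x\<in>UNIV. p0 x) = 1"
    using dist unfolding valid_dist_def by auto
  have qft: "\<And>x0. qf \<alpha> t 0 xt x0 > 0" by (rule qf0_pos[OF a0 at])
  have qfs: "\<And>x0. qf \<alpha> s 0 xs x0 > 0" by (rule qf0_pos[OF a0 as])
  have key: "pden p0 \<alpha> t x0 xt ut * rho p0 \<alpha> t ut xt
      = c * (p0 x0 * qu \<alpha> t xt x0 ut) / pt p0 \<alpha> t xt" for x0 ut
  proof (cases "ptu p0 \<alpha> t xt ut = 0")
    case True
    have "\<forall>x\<in>UNIV. p0 x * qu \<alpha> t xt x ut = 0"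
      using True unfolding ptu_def
      by (subst sum_nonneg_eq_0_iff[symmetric]) (auto intro!: mult_nonneg_nonneg p0nn qu_nonneg at)
    then show ?thesis using True unfolding pden_def rho_def by simp
  next
    case False
    then show ?thesis unfolding pden_def rho_def c_def by (simp add: field_simps)
  qed
  have "(\<Sum>ut\<in>UNIV. plift p0 \<alpha> s t xs us xt ut * rho p0 \<alpha> t ut xt)
     = (\<Sum>x0\<in>UNIV. rres \<alpha> s us x0 xs * qbridge \<alpha> s t xs x0 xt *
          (\<Sum>ut\<in>UNIV. pden p0 \<alpha> t x0 xt ut * rho p0 \<alpha> t ut xt))"
    unfolding plift_def sum_distrib_left sum_distrib_right
    by (subst sum.swap) (simp add: mult.assoc)
  also have "\<dots> = (\<Sum>x0\<in>UNIV. rres \<alpha> s us x0 xs * qbridge \<alpha> s t xs x0 xt *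
          (p0 x0 * qf \<alpha> t 0 xt x0 / pt p0 \<alpha> t xt))"
  proof (rule sum.cong[OF refl])
    fix x0
    have "(\<Sum>ut\<in>UNIV. pden p0 \<alpha> t x0 xt ut * rho p0 \<alpha> t ut xt)
        = p0 x0 * (c * (\<Sum>ut\<in>UNIV. qu \<alpha> t xt x0 ut)) / pt p0 \<alpha> t xt"
      unfolding key by (simp add: sum_divide_distrib sum_distrib_left mult.assoc mult.left_commute)
    also have "\<dots> = p0 x0 * qf \<alpha> t 0 xt x0 / pt p0 \<alpha> t xt"
      unfolding c_def c_sum_qu[of \<alpha>, OF a0] ..
    finally show "rres \<alpha> s us x0 xs * qbridge \<alpha> s t xs x0 xt *
          (\<Sum>ut\<in>UNIV. pden p0 \<alpha> t x0 xt ut * rho p0 \<alpha> t ut xt) =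
          rres \<alpha> s us x0 xs * qbridge \<alpha> s t xs x0 xt *
          (p0 x0 * qf \<alpha> t 0 xt x0 / pt p0 \<alpha> t xt)" by simp
  qed
  also have "\<dots> = (\<Sum>x0\<in>UNIV. qf \<alpha> t s xt xs * c / pt p0 \<alpha> t xt * (p0 x0 * qu \<alpha> s xs x0 us))"
  proof (rule sum.cong[OF refl])
    fix x0
    have "qf \<alpha> t 0 xt x0 \<noteq> 0" "qf \<alpha> s 0 xs x0 \<noteq> 0" using qft[of x0] qfs[of x0] by auto
    then show "rres \<alpha> s us x0 xs * qbridge \<alpha> s t xs x0 xt *
          (p0 x0 * qf \<alpha> t 0 xt x0 / pt p0 \<alpha> t xt) =
          qf \<alpha> t s xt xs * c / pt p0 \<alpha> t xt * (p0 x0 * qu \<alpha> s xs x0 us)"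
      unfolding rres_def qbridge_def c_def by (simp add: field_simps)
  qed
  also have "\<dots> = qf \<alpha> t s xt xs * c / pt p0 \<alpha> t xt * ptu p0 \<alpha> s xs us"
    unfolding ptu_def by (simp add: sum_distrib_left)
  finally have L: "(\<Sum>ut\<in>UNIV. plift p0 \<alpha> s t xs us xt ut * rho p0 \<alpha> t ut xt)
      = qf \<alpha> t s xt xs * c / pt p0 \<alpha> t xt * ptu p0 \<alpha> s xs us" .
  have ps: "pt p0 \<alpha> s xs \<noteq> 0"
  proof
    assume h: "pt p0 \<alpha> s xs = 0"
    have "\<forall>x\<in>UNIV. p0 x * qf \<alpha> s 0 xs x = 0"
      using h unfolding pt_def
      by (subst sum_nonneg_eq_0_iff[symmetric]) (auto intro!: mult_nonneg_nonneg p0nn less_imp_le[OF qfs])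
    then have "\<And>x. p0 x = 0"
    proof -
      fix x
      assume "\<forall>x\<in>UNIV. p0 x * qf \<alpha> s 0 xs x = 0"
      then have "p0 x * qf \<alpha> s 0 xs x = 0" by blast
      with qfs[of x] show "p0 x = 0" by simp
    qed
    then show False using p0sum by simp
  qed
  have R: "prev p0 \<alpha> s t xs xt * rho p0 \<alpha> s us xs
      = qf \<alpha> t s xt xs * c / pt p0 \<alpha> t xt * ptu p0 \<alpha> s xs us"
    using ps pos unfolding prev_def rho_def c_def by (simp add: field_simps)
  show ?thesis using ps by (simp only: L R if_False)
qed

end
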